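(* Let $\mathcal{E}_1=[\theta_1,u_1]$ and $\mathcal{E}_2=[\theta_2,u_2]$ be interval effect algebras, each generating its ordered linear space, each having an order-determining set of states, and each unrestricted. Let $\mathcal{I}$ be an operation from $\mathcal{E}_1$ to $\mathcal{E}_2$. Then: (i) there exists a unique affine map $\mathcal{I}^*\colon\mathcal{E}_2\to\mathcal{E}_1$ such that $s[\mathcal{I}^*(a)]=\mathcal{I}(s)(a)$ for all $s\in\mathcal{S}(\mathcal{E}_1)$ and all $a\in\mathcal{E}_2$; (ii) $\mathcal{I}$ is a channel if and only if $\mathcal{I}^*(u_2)=u_1$.
   Context: Let $V$ be a real vector space with zero $\theta$ and $K\subseteq V$ a positive cone ($\mathbb{R}^+K\subseteq K$, $K+K\subseteq K$, $K\cap(-K)=\{\theta\}$), with partial order $x\le y$ iff $y-x\in K$. For $u\in K$, $u\ne\theta$, the interval effect algebra is $\mathcal{E}=[\theta,u]=\{x\in K: x\le u\}$; for $a,b\in\mathcal{E}$ write $a\perp b$ if $a+b\le u$ (then $a+b\in\mathcal{E}$). $\mathcal{E}$ generates $V$ means $K=\mathbb{R}^+\mathcal{E}$ and $V=K-K$. A state on $\mathcal{E}$ is a map $s\colon\mathcal{E}\to[0,1]$ with $s(u)=1$ and $s(a+b)=s(a)+s(b)$ whenever $a\perp b$; $\mathcal{S}(\mathcal{E})$ denotes the (convex) set of all states. The states are order-determining: for $a,b\in\mathcal{E}$, $a\le b$ iff $s(a)\le s(b)$ for all $s\in\mathcal{S}(\mathcal{E})$. A map between convex sets is affine if it preserves finite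 convex combinations. $\mathcal{E}$ is unrestricted if for every affine $f\colon\mathcal{S}(\mathcal{E})\to[0,1]$ there is $a\in\mathcal{E}$ with $f(s)=s(a)$ for all $s\in\mathcal{S}(\mathcal{E})$. A substate on $\mathcal{E}$ is a function $f=\lambda s$ on $\mathcal{E}$ with $\lambda\in[0,1]$, $s\in\mathcal{S}(\mathcal{E})$; $\mathrm{Sub}(\mathcal{S}(\mathcal{E}))$ is the set of substates. An operation from $\mathcal{E}_1$ to $\mathcal{E}_2$ is an affine map $\mathcal{I}\colon\mathcal{S}(\mathcal{E}_1)\to\mathrm{Sub}(\mathcal{S}(\mathcal{E}_2))$ (convex combinations of substates taken pointwise); it is a channel if $\mathcal{I}(s)\in\mathcal{S}(\mathcal{E}_2)$ for all $s\in\mathcal{S}(\mathcal{E}_1)$. *)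

theory Defs
  imports "HOL-Analysis.Analysis" "HOL-Library.FuncSet"
begin

definition positive_cone :: "'a::real_vector set \<Rightarrow> bool" where
  "positive_cone K \<longleftrightarrow>
     (\<forall>r x. 0 \<le> r \<and> x \<in> K \<longrightarrow> r *\<^sub>R x \<in> K) \<and>
     (\<forall>x\<in>K. \<forall>y\<in>K. x + y \<in> K) \<and>
     K \<inter> uminus ` K = {0}"

definition cone_le :: "'a::real_vector set \<Rightarrow> 'a \<Rightarrow> 'a \<Rightarrow> bool" where
  "cone_le K x y \<longleftrightarrow> y - x \<in> K"

definition effect_interval :: "'a::real_vector set \<Rightarrow> 'a \<Rightarrow> 'a set" where
  "effect_interval K u = {x \<in> K. cone_le K x u}"

definition interval_effect_algebra :: "'a::real_vector set \<Rightarrow> 'a \<Rightarrow> bool" where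
  "interval_effect_algebra K u \<longleftrightarrow> positive_cone K \<and> u \<in> K \<and> u \<noteq> 0"

definition generates :: "'a::real_vector set \<Rightarrow> 'a \<Rightarrow> bool" where
  "generates K u \<longleftrightarrow>
     K = {r *\<^sub>R x | r x. 0 \<le> r \<and> x \<in> effect_interval K u} \<and>
     (UNIV :: 'a set) = {x - y | x y. x \<in> K \<and> y \<in> K}"

text \<open>States, represented extensionally: functions that vanish outside the effect algebra.\<close>
definition states :: "'a::real_vector set \<Rightarrow> 'a \<Rightarrow> ('a \<Rightarrow> real) set" where
  "states K u = {s. (\<forall>a. a \<notin> effect_interval K u \<longrightarrow> s a = 0) \<and>
     (\<forall>a\<in>effect_interval K u. 0 \<le> s a \<and> s a \<le> 1) \<and> s u = 1 \<and>
     (\<forall>a\<in>effect_interval K u. \<forall>b\<in>effect_interval K u.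
        cone_le K (a + b) u \<longrightarrow> s (a + b) = s a + s b)}"

definition order_determining :: "'a::real_vector set \<Rightarrow> 'a \<Rightarrow> bool" where
  "order_determining K u \<longleftrightarrow>
     (\<forall>a\<in>effect_interval K u. \<forall>b\<in>effect_interval K u.
        cone_le K a b \<longleftrightarrow> (\<forall>s\<in>states K u. s a \<le> s b))"

definition affine_on_vecs :: "'a::real_vector set \<Rightarrow> ('a \<Rightarrow> 'c::real_vector) \<Rightarrow> bool" where
  "affine_on_vecs A f \<longleftrightarrow>
     (\<forall>(I::nat set) w p. finite I \<and> (\<forall>i\<in>I. 0 \<le> w i \<and> p i \<in> A) \<and> sum w I = 1 \<longrightarrow>
        f (\<Sum>i\<in>I. w i *\<^sub>R p i) = (\<Sum>i\<in>I. w i *\<^sub>R f (p i)))"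

definition affine_on_funs_real :: "('a \<Rightarrow> real) set \<Rightarrow> (('a \<Rightarrow> real) \<Rightarrow> real) \<Rightarrow> bool" where
  "affine_on_funs_real C f \<longleftrightarrow>
     (\<forall>(I::nat set) w p. finite I \<and> (\<forall>i\<in>I. 0 \<le> w i \<and> p i \<in> C) \<and> sum w I = 1 \<longrightarrow>
        f (\<lambda>x. \<Sum>i\<in>I. w i * p i x) = (\<Sum>i\<in>I. w i * f (p i)))"

definition affine_on_funs_fun ::
    "('a \<Rightarrow> real) set \<Rightarrow> (('a \<Rightarrow> real) \<Rightarrow> ('b \<Rightarrow> real)) \<Rightarrow> bool" where
  "affine_on_funs_fun C F \<longleftrightarrow>
     (\<forall>(I::nat set) w p. finite I \<and> (\<forall>i\<in>I. 0 \<le> w i \<and> p i \<in> C) \<and> sum w I = 1 \<longrightarrow>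
        F (\<lambda>x. \<Sum>i\<in>I. w i * p i x) = (\<lambda>y. \<Sum>i\<in>I. w i * F (p i) y))"

definition unrestricted :: "'a::real_vector set \<Rightarrow> 'a \<Rightarrow> bool" where
  "unrestricted K u \<longleftrightarrow>
     (\<forall>f. (\<forall>s\<in>states K u. 0 \<le> f s \<and> f s \<le> 1) \<and> affine_on_funs_real (states K u) f \<longrightarrow>
        (\<exists>a\<in>effect_interval K u. \<forall>s\<in>states K u. f s = s a))"

definition substates :: "'a::real_vector set \<Rightarrow> 'a \<Rightarrow> ('a \<Rightarrow> real) set" where
  "substates K u = {(\<lambda>x. l * s x) | l s. 0 \<le> l \<and> l \<le> 1 \<and> s \<in> states K u}"

definition operation ::
    "'a::real_vector set \<Rightarrow> 'a \<Rightarrow> 'b::real_vector set \<Rightarrow> 'b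
     \<Rightarrow> (('a \<Rightarrow> real) \<Rightarrow> ('b \<Rightarrow> real)) \<Rightarrow> bool" where
  "operation K1 u1 K2 u2 Op \<longleftrightarrow>
     (\<forall>s\<in>states K1 u1. Op s \<in> substates K2 u2) \<and> affine_on_funs_fun (states K1 u1) Op"

definition channel ::
    "'a::real_vector set \<Rightarrow> 'a \<Rightarrow> 'b::real_vector set \<Rightarrow> 'b
     \<Rightarrow> (('a \<Rightarrow> real) \<Rightarrow> ('b \<Rightarrow> real)) \<Rightarrow> bool" where
  "channel K1 u1 K2 u2 Op \<longleftrightarrow>
     operation K1 u1 K2 u2 Op \<and> (\<forall>s\<in>states K1 u1. Op s \<in> states K2 u2)"

definition dual_map ::
    "'a::real_vector set \<Rightarrow> 'a \<Rightarrow> 'b::real_vector set \<Rightarrow> 'b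
     \<Rightarrow> (('a \<Rightarrow> real) \<Rightarrow> ('b \<Rightarrow> real)) \<Rightarrow> ('b \<Rightarrow> 'a) \<Rightarrow> bool" where
  "dual_map K1 u1 K2 u2 Op D \<longleftrightarrow>
     D \<in> effect_interval K2 u2 \<rightarrow>\<^sub>E effect_interval K1 u1 \<and>
     affine_on_vecs (effect_interval K2 u2) D \<and>
     (\<forall>s\<in>states K1 u1. \<forall>a\<in>effect_interval K2 u2. s (D a) = Op s a)"

end

theory Submission
  imports Defs
begin

lemma pc_zero: "positive_cone K \<Longrightarrow> 0 \<in> K"
  unfolding positive_cone_def by blast

lemma pc_add: "positive_cone K \<Longrightarrow> x \<in> K \<Longrightarrow> y \<in> K \<Longrightarrow> x + y \<in> K"
  unfolding positive_cone_def by blast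

lemma pc_scale: "positive_cone K \<Longrightarrow> 0 \<le> r \<Longrightarrow> x \<in> K \<Longrightarrow> r *\<^sub>R x \<in> K"
  unfolding positive_cone_def by blast

lemma pc_antisym: "positive_cone K \<Longrightarrow> x \<in> K \<Longrightarrow> - x \<in> K \<Longrightarrow> x = 0"
  unfolding positive_cone_def
  by (metis (no_types, lifting) IntI image_eqI minus_minus singletonD)

lemma pc_sum: assumes pc: "positive_cone K" shows "finite I \<Longrightarrow> (\<And>i. i \<in> I \<Longrightarrow> x i \<in> K) \<Longrightarrow> sum x I \<in> K"
  by (induction I rule: finite_induct) (auto intro: pc_add[OF pc] pc_zero[OF pc])

lemma E_subconvex:
  assumes pc: "positive_cone K" and uK: "u \<in> K" and fin: "finite I"
    and h: "\<And>i. i \<in> I \<Longrightarrow> 0 \<le> w i \<and> p i \<in> effect_interval K u"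
    and sw: "sum w I \<le> 1"
  shows "(\<Sum>i\<in>I. w i *\<^sub>R p i) \<in> effect_interval K u"
proof -
  have pK: "\<And>i. i \<in> I \<Longrightarrow> p i \<in> K" and upK: "\<And>i. i \<in> I \<Longrightarrow> u - p i \<in> K"
    using h by (auto simp: effect_interval_def cone_le_def)
  have "(\<Sum>i\<in>I. w i *\<^sub>R p i) \<in> K"
    using pc fin by (rule pc_sum) (use h pK pc_scale[OF pc] in auto)
  moreover have "u - (\<Sum>i\<in>I. w i *\<^sub>R p i) = (1 - sum w I) *\<^sub>R u + (\<Sum>i\<in>I. w i *\<^sub>R (u - p i))"
    by (simp add: scaleR_right_diff_distrib sum_subtractf scaleR_left_diff_distrib scaleR_sum_left)
  moreover have "(1 - sum w I) *\<^sub>R u \<in> K" using pc_scale[OF pc] sw uK by simp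
  moreover have "(\<Sum>i\<in>I. w i *\<^sub>R (u - p i)) \<in> K"
    using pc fin by (rule pc_sum) (use h upK pc_scale[OF pc] in auto)
  ultimately show ?thesis using pc_add[OF pc] by (auto simp: effect_interval_def cone_le_def)
qed

lemma E_scale:
  assumes pc: "positive_cone K" and uK: "u \<in> K" and x: "x \<in> effect_interval K u"
    and r: "0 \<le> r" "r \<le> 1"
  shows "r *\<^sub>R x \<in> effect_interval K u"
  using E_subconvex[OF pc uK, of "{0::nat}" "\<lambda>_. r" "\<lambda>_. x"] x r by simp

lemma E_zero: "positive_cone K \<Longrightarrow> u \<in> K \<Longrightarrow> 0 \<in> effect_interval K u"
  by (simp add: effect_interval_def cone_le_def pc_zero)

lemma E_u: "positive_cone K \<Longrightarrow> u \<in> K \<Longrightarrow> u \<in> effect_interval K u"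
  by (simp add: effect_interval_def cone_le_def pc_zero)

lemma state_E: "s \<in> states K u \<Longrightarrow> a \<in> effect_interval K u \<Longrightarrow> 0 \<le> s a \<and> s a \<le> 1"
  by (simp add: states_def)

lemma state_add: "s \<in> states K u \<Longrightarrow> a \<in> effect_interval K u \<Longrightarrow> b \<in> effect_interval K u
   \<Longrightarrow> a + b \<in> effect_interval K u \<Longrightarrow> s (a + b) = s a + s b"
  by (simp add: states_def effect_interval_def)

lemma state_zero:
  assumes "positive_cone K" "u \<in> K" "s \<in> states K u" shows "s 0 = 0"
  using state_add[OF assms(3) E_zero[OF assms(1,2)] E_zero[OF assms(1,2)]] E_zero[OF assms(1,2)] by simp

lemma state_mono:
  assumes pc: "positive_cone K" and uK: "u \<in> K" and s: "s \<in> states K u"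
    and a: "a \<in> effect_interval K u" and b: "b \<in> effect_interval K u" and ab: "b - a \<in> K"
  shows "s a \<le> s b"
proof -
  have eq: "u - (b - a) = (u - b) + a" by simp
  have "(u - b) + a \<in> K" using a b pc_add[OF pc] by (auto simp: effect_interval_def cone_le_def)
  hence "u - (b - a) \<in> K" by (subst eq)
  hence baE: "b - a \<in> effect_interval K u" using ab
    by (auto simp: effect_interval_def cone_le_def)
  moreover have "a + (b - a) = b" by simp
  ultimately have "s b = s a + s (b - a)" using state_add[OF s a, of "b - a"] b by simp
  thus ?thesis using state_E[OF s baE] by simp
qed

lemma state_scale_mono:
  assumes pc: "positive_cone K" and uK: "u \<in> K" and s: "s \<in> states K u"
    and x: "x \<in> effect_interval K u" and cd: "0 \<le> c" "c \<le> d" "d \<le> 1"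
  shows "s (c *\<^sub>R x) \<le> s (d *\<^sub>R x)"
proof -
  have "d *\<^sub>R x - c *\<^sub>R x = (d - c) *\<^sub>R x" by (simp add: scaleR_left_diff_distrib)
  moreover have "x \<in> K" using x by (simp add: effect_interval_def)
  ultimately have "d *\<^sub>R x - c *\<^sub>R x \<in> K" using pc_scale[OF pc] cd by simp
  thus ?thesis using state_mono[OF pc uK s] E_scale[OF pc uK x] cd by simp
qed

lemma state_rat:
  assumes pc: "positive_cone K" and uK: "u \<in> K" and s: "s \<in> states K u"
    and x: "x \<in> effect_interval K u" and n: "0 < n"
  shows "m \<le> n \<Longrightarrow> s ((real m / real n) *\<^sub>R x) = real m * s ((1 / real n) *\<^sub>R x)"
proof (induction m)
  case 0
  then show ?case using state_zero[OF pc uK s] by simp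
next
  case (Suc m)
  have e1: "(real m / real n) *\<^sub>R x \<in> effect_interval K u"
    using E_scale[OF pc uK x] Suc.prems n by simp
  have e2: "(1 / real n) *\<^sub>R x \<in> effect_interval K u"
    using E_scale[OF pc uK x] n by simp
  have e3: "(real (Suc m) / real n) *\<^sub>R x \<in> effect_interval K u"
    using E_scale[OF pc uK x] Suc.prems n by simp
  have eq: "(real (Suc m) / real n) *\<^sub>R x = (real m / real n) *\<^sub>R x + (1 / real n) *\<^sub>R x"
    by (simp add: add_divide_distrib scaleR_left_distrib)
  have "s ((real (Suc m) / real n) *\<^sub>R x) = s ((real m / real n) *\<^sub>R x) + s ((1 / real n) *\<^sub>R x)"
    using state_add[OF s e1 e2] e3 unfolding eq by blast
  then show ?case using Suc by (simp add: algebra_simps)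
qed

lemma state_rat2:
  assumes pc: "positive_cone K" and uK: "u \<in> K" and s: "s \<in> states K u"
    and x: "x \<in> effect_interval K u" and n: "0 < n" and m: "m \<le> n"
  shows "s ((real m / real n) *\<^sub>R x) = real m / real n * s x"
proof -
  have "s x = real n * s ((1 / real n) *\<^sub>R x)"
    using state_rat[OF pc uK s x n, of n] n by simp
  thus ?thesis using state_rat[OF pc uK s x n m] n by simp
qed

lemma state_hom:
  assumes pc: "positive_cone K" and uK: "u \<in> K" and s: "s \<in> states K u"
    and x: "x \<in> effect_interval K u" and r: "0 \<le> r" "r \<le> 1"
  shows "s (r *\<^sub>R x) = r * s x"
proof (cases "r = 1")
  case True then show ?thesis by simp
next
  case False
  hence r1: "r < 1" using r by simp
  have sx: "0 \<le> s x" "s x \<le> 1" using state_E[OF s x] by auto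
  have bound: "\<bar>s (r *\<^sub>R x) - r * s x\<bar> \<le> 1 / real n" if n: "0 < n" for n :: nat
  proof -
    define m where "m = nat \<lfloor>r * real n\<rfloor>"
    have fl: "real m \<le> r * real n" "r * real n < real m + 1"
      unfolding m_def using r n by (simp_all add: of_nat_nat)
    have mn: "m < n"
    proof -
      have "r * real n < real n" using r1 n by simp
      thus ?thesis using fl by linarith
    qed
    have nr: "0 < real n" using n by simp
    have lo: "real m / real n \<le> r" using fl nr by (simp add: divide_le_eq mult.commute)
    have hi: "r \<le> real (Suc m) / real n" using fl nr by (simp add: le_divide_eq mult.commute)
    have hi1: "real (Suc m) / real n \<le> 1" using mn nr by simp
    have A: "s ((real m / real n) *\<^sub>R x) \<le> s (r *\<^sub>R x)"
      using state_scale_mono[OF pc uK s x _ lo r(2)] by simp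
    have B: "s (r *\<^sub>R x) \<le> s ((real (Suc m) / real n) *\<^sub>R x)"
      using state_scale_mono[OF pc uK s x r(1) hi hi1] .
    have A': "s ((real m / real n) *\<^sub>R x) = real m / real n * s x"
      using state_rat2[OF pc uK s x n] mn by simp
    have B': "s ((real (Suc m) / real n) *\<^sub>R x) = real (Suc m) / real n * s x"
      using state_rat2[OF pc uK s x n, of "Suc m"] mn by (simp only: Suc_leI)
    have C: "real m / real n * s x \<le> r * s x" using mult_right_mono[OF lo sx(1)] .
    have D: "r * s x \<le> real (Suc m) / real n * s x" using mult_right_mono[OF hi sx(1)] .
    have E: "real (Suc m) / real n * s x - real m / real n * s x = s x / real n"
      by (simp add: field_simps add_divide_distrib)
    have "s x / real n \<le> 1 / real n" using sx nr by (simp add: divide_right_mono)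
    thus ?thesis using A B A' B' C D E by linarith
  qed
  show ?thesis
  proof (rule ccontr)
    assume "s (r *\<^sub>R x) \<noteq> r * s x"
    hence d: "0 < \<bar>s (r *\<^sub>R x) - r * s x\<bar>" by simp
    obtain n :: nat where n: "1 / \<bar>s (r *\<^sub>R x) - r * s x\<bar> < real n"
      using reals_Archimedean2 by blast
    have n0: "0 < n" using n d by (metis divide_pos_pos gr0I less_numeral_extra(1) of_nat_0 order.asym)
    have "1 < real n * \<bar>s (r *\<^sub>R x) - r * s x\<bar>" using n d by (simp add: divide_less_eq)
    moreover have "real n * \<bar>s (r *\<^sub>R x) - r * s x\<bar> \<le> 1"
      using bound[OF n0] n0 by (simp add: le_divide_eq mult.commute)
    ultimately show False by simp
  qed
qed

lemma state_lin:
  assumes pc: "positive_cone K" and uK: "u \<in> K" and s: "s \<in> states K u"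
  shows "finite I \<Longrightarrow> (\<And>i. i \<in> I \<Longrightarrow> 0 \<le> w i \<and> p i \<in> effect_interval K u) \<Longrightarrow> sum w I \<le> 1
    \<Longrightarrow> s (\<Sum>i\<in>I. w i *\<^sub>R p i) = (\<Sum>i\<in>I. w i * s (p i))"
proof (induction I rule: finite_induct)
  case empty
  then show ?case using state_zero[OF pc uK s] by simp
next
  case (insert j I)
  have wj: "0 \<le> w j" "p j \<in> effect_interval K u" using insert.prems by auto
  have sI: "sum w I \<le> 1" using insert.prems(2) insert.hyps wj(1) by simp
  have wj1: "w j \<le> 1" using insert.prems(2) insert.hyps sum_nonneg[of I w] insert.prems(1) by force
  have e1: "w j *\<^sub>R p j \<in> effect_interval K u" using E_scale[OF pc uK wj(2) wj(1) wj1] .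
  have e2: "(\<Sum>i\<in>I. w i *\<^sub>R p i) \<in> effect_interval K u"
    using E_subconvex[OF pc uK insert.hyps(1)] insert.prems sI by auto
  have e3: "(\<Sum>i\<in>insert j I. w i *\<^sub>R p i) \<in> effect_interval K u"
    using E_subconvex[OF pc uK _ insert.prems(1) insert.prems(2)] insert.hyps by simp
  have "s (\<Sum>i\<in>insert j I. w i *\<^sub>R p i) = s (w j *\<^sub>R p j) + s (\<Sum>i\<in>I. w i *\<^sub>R p i)"
    using state_add[OF s e1 e2] e3 insert.hyps by simp
  also have "\<dots> = w j * s (p j) + (\<Sum>i\<in>I. w i * s (p i))"
    using state_hom[OF pc uK s wj(2) wj(1) wj1] insert.IH insert.prems sI by auto
  finally show ?case using insert.hyps by simp
qed

lemma separate:
  assumes pc: "positive_cone K" and od: "order_determining K u"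
    and a: "a \<in> effect_interval K u" and b: "b \<in> effect_interval K u"
    and eq: "\<And>s. s \<in> states K u \<Longrightarrow> s a = s b"
  shows "a = b"
proof -
  have "\<forall>s\<in>states K u. s a \<le> s b" "\<forall>s\<in>states K u. s b \<le> s a" using eq by (metis order_refl)+
  hence "cone_le K a b" "cone_le K b a" using od a b unfolding order_determining_def by blast+
  hence "b - a \<in> K" "- (b - a) \<in> K" by (auto simp: cone_le_def)
  thus ?thesis using pc_antisym[OF pc] by force
qed

lemma substate_obtain:
  assumes "f \<in> substates K u"
  obtains l t where "0 \<le> l" "l \<le> 1" "t \<in> states K u" "f = (\<lambda>x. l * t x)"
  using assms unfolding substates_def by blast

theorem lemma3p1:
  fixes K1 :: "'a::real_vector set" and u1 :: 'a
    and K2 :: "'b::real_vector set" and u2 :: 'b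
    and Op :: "('a \<Rightarrow> real) \<Rightarrow> ('b \<Rightarrow> real)"
  assumes "interval_effect_algebra K1 u1" and "interval_effect_algebra K2 u2"
    and "generates K1 u1" and "generates K2 u2"
    and "order_determining K1 u1" and "order_determining K2 u2"
    and "unrestricted K1 u1" and "unrestricted K2 u2"
    and "operation K1 u1 K2 u2 Op"
  shows "(\<exists>!D. dual_map K1 u1 K2 u2 Op D) \<and>
         (\<forall>D. dual_map K1 u1 K2 u2 Op D \<longrightarrow> (channel K1 u1 K2 u2 Op \<longleftrightarrow> D u2 = u1))"
proof -
  define E1 where "E1 = effect_interval K1 u1"
  define E2 where "E2 = effect_interval K2 u2"
  define S1 where "S1 = states K1 u1"
  have pc1: "positive_cone K1" and u1K: "u1 \<in> K1" using assms(1) by (auto simp: interval_effect_algebra_def)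
  have pc2: "positive_cone K2" and u2K: "u2 \<in> K2" using assms(2) by (auto simp: interval_effect_algebra_def)
  have opsub: "\<And>s. s \<in> S1 \<Longrightarrow> Op s \<in> substates K2 u2" using assms(9) by (auto simp: operation_def S1_def)
  have opaff: "affine_on_funs_fun S1 Op" using assms(9) by (auto simp: operation_def S1_def)
  have sep1: "\<And>a b. a \<in> E1 \<Longrightarrow> b \<in> E1 \<Longrightarrow> (\<And>s. s \<in> S1 \<Longrightarrow> s a = s b) \<Longrightarrow> a = b"
    using separate[OF pc1 assms(5)] unfolding E1_def S1_def by blast
  have ex: "\<exists>b\<in>E1. \<forall>s\<in>S1. Op s a = s b" if a: "a \<in> E2" for a
  proof -
    have unr: "\<forall>f. (\<forall>s\<in>S1. 0 \<le> f s \<and> f s \<le> 1) \<and> affine_on_funs_real S1 f \<longrightarrow>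
        (\<exists>a\<in>E1. \<forall>s\<in>S1. f s = s a)"
      using assms(7) unfolding unrestricted_def E1_def S1_def .
    have c1: "(\<forall>s\<in>S1. 0 \<le> Op s a \<and> Op s a \<le> 1)"
    proof
      fix s assume "s \<in> S1"
      obtain l t where lt: "0 \<le> l" "l \<le> 1" "t \<in> states K2 u2" "Op s = (\<lambda>x. l * t x)"
        by (rule substate_obtain[OF opsub[OF \<open>s \<in> S1\<close>]])
      have "0 \<le> t a" "t a \<le> 1" using state_E[OF lt(3)] a E2_def by simp_all
      thus "0 \<le> Op s a \<and> Op s a \<le> 1" using lt by (simp add: mult_le_one)
    qed
    have c2: "affine_on_funs_real S1 (\<lambda>s. Op s a)"
      unfolding affine_on_funs_real_def
    proof (intro allI impI)
      fix I :: "nat set" and w :: "nat \<Rightarrow> real" and p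
      assume h: "finite I \<and> (\<forall>i\<in>I. 0 \<le> w i \<and> p i \<in> S1) \<and> sum w I = 1"
      have "Op (\<lambda>x. \<Sum>i\<in>I. w i * p i x) = (\<lambda>y. \<Sum>i\<in>I. w i * Op (p i) y)"
        using opaff h unfolding affine_on_funs_fun_def by blast
      thus "Op (\<lambda>x. \<Sum>i\<in>I. w i * p i x) a = (\<Sum>i\<in>I. w i * Op (p i) a)" by (rule fun_cong[THEN trans]) simp
    qed
    have "\<exists>b\<in>E1. \<forall>s\<in>S1. (\<lambda>s. Op s a) s = s b"
      using unr[rule_format, OF conjI[OF c1 c2]] .
    thus ?thesis by simp
  qed
  define D where "D = restrict (\<lambda>a. SOME b. b \<in> E1 \<and> (\<forall>s\<in>S1. Op s a = s b)) E2"
  have Dprop: "D a \<in> E1 \<and> (\<forall>s\<in>S1. Op s a = s (D a))" if "a \<in> E2" for a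
  proof -
    have exb: "\<exists>b. b \<in> E1 \<and> (\<forall>s\<in>S1. Op s a = s b)" using ex[OF that] by blast
    have Da: "D a = (SOME b. b \<in> E1 \<and> (\<forall>s\<in>S1. Op s a = s b))"
      unfolding D_def using that by (rule restrict_apply')
    show ?thesis unfolding Da by (rule someI_ex[OF exb])
  qed
  have DPi: "D \<in> E2 \<rightarrow>\<^sub>E E1"
  proof -
    have "\<forall>a\<in>E2. D a \<in> E1" using Dprop by blast
    moreover have "D \<in> extensional E2" unfolding D_def by (rule restrict_extensional)
    ultimately show ?thesis by (simp add: PiE_iff)
  qed
  have Daff: "affine_on_vecs E2 D"
    unfolding affine_on_vecs_def
  proof (intro allI impI)
    fix I :: "nat set" and w :: "nat \<Rightarrow> real" and p
    assume h: "finite I \<and> (\<forall>i\<in>I. 0 \<le> w i \<and> p i \<in> E2) \<and> sum w I = 1"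
    have fI: "finite I" and sw: "sum w I \<le> 1" using h by simp_all
    have hp: "\<And>i. i \<in> I \<Longrightarrow> 0 \<le> w i \<and> p i \<in> effect_interval K2 u2" using h E2_def by blast
    have hd: "\<And>i. i \<in> I \<Longrightarrow> 0 \<le> w i \<and> D (p i) \<in> effect_interval K1 u1"
      using h Dprop E1_def by blast
    have cE: "(\<Sum>i\<in>I. w i *\<^sub>R p i) \<in> E2"
      using E_subconvex[OF pc2 u2K fI hp sw] E2_def by simp
    have dE: "(\<Sum>i\<in>I. w i *\<^sub>R D (p i)) \<in> E1"
      using E_subconvex[OF pc1 u1K fI hd sw] E1_def by simp
    show "D (\<Sum>i\<in>I. w i *\<^sub>R p i) = (\<Sum>i\<in>I. w i *\<^sub>R D (p i))"
    proof (rule sep1[OF conjunct1[OF Dprop[OF cE]] dE])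
      fix s assume s: "s \<in> S1"
      have s1: "s \<in> states K1 u1" using s S1_def by simp
      obtain l t where lt: "0 \<le> l" "l \<le> 1" "t \<in> states K2 u2" "Op s = (\<lambda>x. l * t x)"
        by (rule substate_obtain[OF opsub[OF s]])
      have "s (D (\<Sum>i\<in>I. w i *\<^sub>R p i)) = Op s (\<Sum>i\<in>I. w i *\<^sub>R p i)"
        using Dprop[OF cE] s by simp
      also have "\<dots> = l * (\<Sum>i\<in>I. w i * t (p i))"
        using lt(4) state_lin[OF pc2 u2K lt(3) fI hp sw] by simp
      also have "\<dots> = (\<Sum>i\<in>I. w i * Op s (p i))"
        using lt by (simp add: sum_distrib_left algebra_simps)
      also have "\<dots> = (\<Sum>i\<in>I. w i * s (D (p i)))"
        by (intro sum.cong refl) (use Dprop s h in simp)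
      also have "\<dots> = s (\<Sum>i\<in>I. w i *\<^sub>R D (p i))"
        using state_lin[OF pc1 u1K s1 fI hd sw] by simp
      finally show "s (D (\<Sum>i\<in>I. w i *\<^sub>R p i)) = s (\<Sum>i\<in>I. w i *\<^sub>R D (p i))" .
    qed
  qed
  have dualD: "dual_map K1 u1 K2 u2 Op D"
    unfolding dual_map_def E1_def[symmetric] E2_def[symmetric] S1_def[symmetric] using DPi Daff Dprop by simp
  have uniq: "D' = D''" if "dual_map K1 u1 K2 u2 Op D'" "dual_map K1 u1 K2 u2 Op D''" for D' D''
  proof (rule PiE_ext)
    have t1: "D' \<in> E2 \<rightarrow>\<^sub>E E1" "\<forall>s\<in>S1. \<forall>a\<in>E2. s (D' a) = Op s a"
      using that(1) unfolding dual_map_def E1_def[symmetric] E2_def[symmetric] S1_def[symmetric] by blast+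
    have t2: "D'' \<in> E2 \<rightarrow>\<^sub>E E1" "\<forall>s\<in>S1. \<forall>a\<in>E2. s (D'' a) = Op s a"
      using that(2) unfolding dual_map_def E1_def[symmetric] E2_def[symmetric] S1_def[symmetric] by blast+
    show "D' \<in> E2 \<rightarrow>\<^sub>E E1" "D'' \<in> E2 \<rightarrow>\<^sub>E E1" using t1 t2 by blast+
    fix a assume a: "a \<in> E2"
    have "D' a \<in> E1" "D'' a \<in> E1" using t1(1) t2(1) a by (auto simp: PiE_iff)
    thus "D' a = D'' a"
      using sep1[of "D' a" "D'' a"] a t1(2) t2(2) by simp
  qed
  have part2: "channel K1 u1 K2 u2 Op \<longleftrightarrow> D' u2 = u1" if dD: "dual_map K1 u1 K2 u2 Op D'" for D'
  proof -
    have u2E: "u2 \<in> E2" using E_u[OF pc2 u2K] E2_def by simp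
    have u1E: "u1 \<in> E1" using E_u[OF pc1 u1K] E1_def by simp
    have t1: "D' \<in> E2 \<rightarrow>\<^sub>E E1" "\<forall>s\<in>S1. \<forall>a\<in>E2. s (D' a) = Op s a"
      using dD unfolding dual_map_def E1_def[symmetric] E2_def[symmetric] S1_def[symmetric] by blast+
    have D'u: "D' u2 \<in> E1" "\<forall>s\<in>S1. s (D' u2) = Op s u2"
      using t1 u2E by (auto simp: PiE_iff)
    show ?thesis
    proof
      assume ch: "channel K1 u1 K2 u2 Op"
      show "D' u2 = u1"
      proof (rule sep1[OF D'u(1) u1E])
        fix s assume s: "s \<in> S1"
        have "Op s \<in> states K2 u2" using ch s unfolding channel_def S1_def by auto
        hence "Op s u2 = 1" by (simp add: states_def)
        moreover have "s u1 = 1" using s by (simp add: states_def S1_def)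
        ultimately show "s (D' u2) = s u1" using D'u(2) s by simp
      qed
    next
      assume du: "D' u2 = u1"
      have "Op s \<in> states K2 u2" if s: "s \<in> S1" for s
      proof -
        obtain l t where lt: "0 \<le> l" "l \<le> 1" "t \<in> states K2 u2" "Op s = (\<lambda>x. l * t x)"
          by (rule substate_obtain[OF opsub[OF s]])
        have "Op s u2 = 1" using D'u(2) s du by (simp add: states_def S1_def)
        moreover have "t u2 = 1" using lt(3) by (simp add: states_def)
        ultimately have "l = 1" using lt(4) by simp
        thus ?thesis using lt by simp
      qed
      thus "channel K1 u1 K2 u2 Op" using assms(9) unfolding channel_def S1_def by auto
    qed
  qed
  show ?thesis using dualD uniq part2 by blast
qed

end
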